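(* Suppose that for each $j=0,\dots,n$ the kernel $K_j$ belongs to $\mathrm{C}^2(0,2\pi)$, satisfies $K_j''<0$ on $(0,2\pi)$, and satisfies $K_j(0)=K_j(2\pi)=-\infty$. Then every equioscillation point belongs to some open simplex $S_\sigma$, and each simplex $S_\sigma$ contains exactly one equioscillation point.
   Context: Identify the torus $\mathbb{T}=\mathbb{R}/2\pi\mathbb{Z}$ with $[0,2\pi)$. The kernels $K_j$ are $2\pi$-periodic functions $\mathbb{R}\to[-\infty,\infty)$, real-valued and concave on $(0,2\pi)$, and $K_j(0)=K_j(2\pi)$ denotes the common value of $\lim_{t\downarrow0}K_j(t)$ and $\lim_{t\uparrow2\pi}K_j(t)$. For $\mathbf{y}\in\mathbb{T}^n$ put $y_0=0$, $y_{n+1}=2\pi$, $F(\mathbf{y},t)=K_0(t)+\sum_{j=1}^nK_j(t-y_j)$. For a permutation $\sigma$ of $\{1,\dots,n\}$ ($\sigma(0)=0,\sigma(n+1)=n+1$), $S_\sigma=\{\mathbf{y}:0<y_{\sigma(1)}<\dots<y_{\sigma(n)}<2\pi\}$ and $\overline{S_\sigma}$ is the set where $0\le y_{\sigma(1)}\le\dots\le y_{\sigma(n)}\le2\pi$; for $\mathbf{y}\in\overline{S_\sigma}$, $m_{\sigma(k)}(\mathbf{y})=\sup_{t\in[y_{\sigma(k)},y_{\sigma(k+1)}]}F(\mathbf{y},t)$, $k=0,\dots,n$. A point $\mathbf{y}\in\mathbb{T}^n$ is an equioscillation point if for some $\sigma$ with $\mathbf{y}\in\overline{S_\sigma}$ one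 has $m_0(\mathbf{y})=\dots=m_n(\mathbf{y})$. *)

theory Defs
  imports "HOL-Analysis.Analysis" "HOL-Library.Extended_Real"
begin

text \<open>Points of the torus T^n, identified with [0,2pi)^n. A point is a function
  y :: nat => real with coordinates y 1, ..., y n in [0, 2pi); coordinates outside
  {1..n} are fixed to 0 so that points are uniquely represented.\<close>
definition torus_pts :: "nat \<Rightarrow> (nat \<Rightarrow> real) set" where
  "torus_pts n = {y. (\<forall>j\<in>{1..n}. 0 \<le> y j \<and> y j < 2*pi) \<and> (\<forall>j. j \<notin> {1..n} \<longrightarrow> y j = 0)}"

definition ynode :: "nat \<Rightarrow> (nat \<Rightarrow> real) \<Rightarrow> nat \<Rightarrow> real" where
  "ynode n y j = (if j = 0 then 0 else if j = n + 1 then 2*pi else y j)"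

definition Fsum :: "nat \<Rightarrow> (nat \<Rightarrow> real \<Rightarrow> ereal) \<Rightarrow> (nat \<Rightarrow> real) \<Rightarrow> real \<Rightarrow> ereal" where
  "Fsum n K y t = K 0 t + (\<Sum>j\<in>{1..n}. K j (t - y j))"

text \<open>Open Ssigma S_sigma and its closure, for sigma a permutation of {1..n}
  (extended by sigma 0 = 0, sigma (n+1) = n+1, automatic for permutes).\<close>
definition Ssigma :: "nat \<Rightarrow> (nat \<Rightarrow> nat) \<Rightarrow> (nat \<Rightarrow> real) set" where
  "Ssigma n \<sigma> = {y \<in> torus_pts n. \<forall>k\<in>{0..n}. ynode n y (\<sigma> k) < ynode n y (\<sigma> (k+1))}"

definition Ssigma_cl :: "nat \<Rightarrow> (nat \<Rightarrow> nat) \<Rightarrow> (nat \<Rightarrow> real) set" where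
  "Ssigma_cl n \<sigma> = {y \<in> torus_pts n. \<forall>k\<in>{0..n}. ynode n y (\<sigma> k) \<le> ynode n y (\<sigma> (k+1))}"

definition interval_max :: "nat \<Rightarrow> (nat \<Rightarrow> real \<Rightarrow> ereal) \<Rightarrow> (nat \<Rightarrow> nat) \<Rightarrow> (nat \<Rightarrow> real) \<Rightarrow> nat \<Rightarrow> ereal" where
  "interval_max n K \<sigma> y k = (SUP t\<in>{ynode n y (\<sigma> k) .. ynode n y (\<sigma> (k+1))}. Fsum n K y t)"

definition equiosc_point :: "nat \<Rightarrow> (nat \<Rightarrow> real \<Rightarrow> ereal) \<Rightarrow> (nat \<Rightarrow> real) \<Rightarrow> bool" where
  "equiosc_point n K y \<longleftrightarrow> y \<in> torus_pts n \<and>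
     (\<exists>\<sigma>. \<sigma> permutes {1..n} \<and> y \<in> Ssigma_cl n \<sigma> \<and>
        (\<forall>k\<in>{0..n}. interval_max n K \<sigma> y k = interval_max n K \<sigma> y 0))"

end

theory Submission
  imports Defs
begin

definition fr :: "real \<Rightarrow> real" where "fr t = t - 2*pi * of_int \<lfloor>t/(2*pi)\<rfloor>"

lemma fr_ge0: "0 \<le> fr t"
proof -
  have "of_int \<lfloor>t/(2*pi)\<rfloor> \<le> t/(2*pi)" by (rule of_int_floor_le)
  hence "2*pi * of_int \<lfloor>t/(2*pi)\<rfloor> \<le> 2*pi * (t/(2*pi))" by (intro mult_left_mono) auto
  thus ?thesis by (simp add: fr_def)
qed

lemma fr_less: "fr t < 2*pi"
proof -
  have "t/(2*pi) < of_int \<lfloor>t/(2*pi)\<rfloor> + 1" by (rule real_of_int_floor_add_one_gt)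
  hence "t < 2*pi * of_int \<lfloor>t/(2*pi)\<rfloor> + 2*pi" by (simp add: field_simps)
  thus ?thesis by (simp add: fr_def)
qed

lemma fr_id: "0 \<le> t \<Longrightarrow> t < 2*pi \<Longrightarrow> fr t = t"
proof -
  assume a: "0 \<le> t" "t < 2*pi"
  have "\<lfloor>t/(2*pi)\<rfloor> = 0" using a by (simp add: floor_eq_iff field_simps)
  thus ?thesis by (simp add: fr_def)
qed

lemma fr_shift: "fr (t + 2*pi * of_int m) = fr t"
proof -
  have "(t + 2*pi * of_int m)/(2*pi) = t/(2*pi) + of_int m" by (simp add: field_simps)
  hence "\<lfloor>(t + 2*pi * of_int m)/(2*pi)\<rfloor> = \<lfloor>t/(2*pi)\<rfloor> + m" by simp
  thus ?thesis by (simp add: fr_def algebra_simps)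
qed

lemma fr_plus: "fr (t + 2*pi) = fr t"
  using fr_shift[of t 1] by simp

lemma fr_minus: "fr (t - 2*pi) = fr t"
  using fr_shift[of t "-1"] by simp

lemma fr_decomp: "t = fr t + 2*pi * of_int \<lfloor>t/(2*pi)\<rfloor>"
  by (simp add: fr_def)

locale kern =
  fixes n :: nat and K :: "nat \<Rightarrow> real \<Rightarrow> ereal" and k :: "nat \<Rightarrow> real \<Rightarrow> real"
  assumes periodic: "\<And>j t. j \<le> n \<Longrightarrow> K j (t + 2*pi) = K j t"
    and real_valued: "\<And>j t. j \<le> n \<Longrightarrow> t \<in> {0<..<2*pi} \<Longrightarrow> K j t = ereal (k j t)"
    and C2: "\<And>j. j \<le> n \<Longrightarrow> \<exists>k' k''. (\<forall>t\<in>{0<..<2*pi}.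
               (k j has_real_derivative k' t) (at t) \<and> (k' has_real_derivative k'' t) (at t)
               \<and> k'' t < 0) \<and> continuous_on {0<..<2*pi} k''"
    and at_zero: "\<And>j. j \<le> n \<Longrightarrow> K j 0 = -\<infinity>"
    and lim_right: "\<And>j. j \<le> n \<Longrightarrow> filterlim (k j) at_bot (at_right 0)"
    and lim_left: "\<And>j. j \<le> n \<Longrightarrow> filterlim (k j) at_bot (at_left (2*pi))"
begin

definition kr :: "nat \<Rightarrow> real \<Rightarrow> real" where "kr j t = k j (fr t)"

lemma Kper_nat: "j \<le> n \<Longrightarrow> K j (t + 2*pi * real m) = K j t"
proof (induction m arbitrary: t)
  case 0 thus ?case by simp
next
  case (Suc m)
  have "K j (t + 2*pi * real (Suc m)) = K j ((t + 2*pi * real m) + 2*pi)"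
    by (simp add: algebra_simps)
  also have "\<dots> = K j (t + 2*pi * real m)" using periodic Suc by blast
  finally show ?case using Suc by simp
qed

lemma Kper_int: "j \<le> n \<Longrightarrow> K j (t + 2*pi * of_int m) = K j t"
proof (cases "m \<ge> 0")
  case True
  assume j: "j \<le> n"
  have e: "t + 2*pi * of_int m = t + 2*pi * real (nat m)" using True by simp
  show ?thesis unfolding e by (rule Kper_nat[OF j])
next
  case False
  assume j: "j \<le> n"
  have e: "(t + 2*pi * of_int m) + 2*pi * real (nat (-m)) = t" using False by simp
  show ?thesis using Kper_nat[OF j, of "t + 2*pi * of_int m" "nat (-m)"] unfolding e by simp
qed

lemma K_fr: "j \<le> n \<Longrightarrow> K j t = K j (fr t)"
proof -
  assume j: "j \<le> n"
  have "fr t = t + 2*pi * of_int (- \<lfloor>t/(2*pi)\<rfloor>)" by (simp add: fr_def)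
  thus ?thesis using Kper_int[OF j, of t "- \<lfloor>t/(2*pi)\<rfloor>"] by simp
qed

lemma K_eq: "j \<le> n \<Longrightarrow> K j t = (if fr t = 0 then -\<infinity> else ereal (kr j t))"
proof -
  assume j: "j \<le> n"
  show ?thesis
  proof (cases "fr t = 0")
    case True thus ?thesis using K_fr[OF j, of t] at_zero[OF j] by simp
  next
    case False
    hence "fr t \<in> {0<..<2*pi}" using fr_ge0[of t] fr_less[of t] by auto
    thus ?thesis using K_fr[OF j, of t] real_valued[OF j] False by (simp add: kr_def)
  qed
qed

lemma kr_plus: "kr j (t + 2*pi) = kr j t" by (simp add: kr_def fr_plus)
lemma kr_id: "0 < t \<Longrightarrow> t < 2*pi \<Longrightarrow> kr j t = k j t" by (simp add: kr_def fr_id)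

lemma SC:
  assumes j: "j \<le> n" and "0 < u" "u < v" "0 < h" "v + h < 2*pi"
  shows "k j (v+h) - k j v < k j (u+h) - k j u"
proof -
  obtain k' k'' where kk: "\<forall>t\<in>{0<..<2*pi}.
      (k j has_real_derivative k' t) (at t) \<and> (k' has_real_derivative k'' t) (at t) \<and> k'' t < 0"
    using C2[OF j] by blast
  have dec: "k' b < k' a" if "0 < a" "a < b" "b < 2*pi" for a b
  proof (rule DERIV_neg_imp_decreasing[OF \<open>a<b\<close>])
    fix x assume "a \<le> x" "x \<le> b"
    hence "x \<in> {0<..<2*pi}" using that by auto
    thus "\<exists>y. (k' has_real_derivative y) (at x) \<and> y < 0" using kk by blast
  qed
  have "(\<lambda>s. k j (s+h) - k j s) v < (\<lambda>s. k j (s+h) - k j s) u"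
  proof (rule DERIV_neg_imp_decreasing[OF \<open>u<v\<close>])
    fix x assume x: "u \<le> x" "x \<le> v"
    have xh: "x + h \<in> {0<..<2*pi}" "x \<in> {0<..<2*pi}" using x assms by auto
    have d0: "(k j has_real_derivative k' (x+h)) (at (x+h))" using kk xh by blast
    have d1: "((\<lambda>s. k j (s+h)) has_real_derivative k' (x+h)) (at x)"
      using d0 DERIV_shift[of "k j" "k' (x+h)" x h] by simp
    have d2: "(k j has_real_derivative k' x) (at x)" using kk xh by blast
    have lt: "k' (x+h) < k' x" using dec[of x "x+h"] xh assms by simp
    show "\<exists>y. ((\<lambda>s. k j (s+h) - k j s) has_real_derivative y) (at x) \<and> y < 0"
      using DERIV_diff[OF d1 d2] lt by (intro exI[of _ "k' (x+h) - k' x"]) simp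
  qed
  thus ?thesis by simp
qed

lemma Mono:
  assumes j: "j \<le> n" and "a < b" "b < t" "t < t'" "t' < a + 2*pi"
  shows "kr j (t - b) - kr j (t - a) < kr j (t' - b) - kr j (t' - a)"
proof -
  have e: "kr j (t - b) = k j (t - b)" "kr j (t - a) = k j (t - a)"
    "kr j (t' - b) = k j (t' - b)" "kr j (t' - a) = k j (t' - a)"
    using assms by (simp_all add: kr_id)
  have "k j ((t - a) + (t' - t)) - k j (t - a) < k j ((t - b) + (t' - t)) - k j (t - b)"
    by (rule SC[OF j]) (use assms in auto)
  thus ?thesis unfolding e by (simp add: algebra_simps)
qed

definition Ee :: "nat \<Rightarrow> real \<Rightarrow> real" where
  "Ee j t = (if fr t = 0 then 0 else exp (kr j t))"

lemma Ee_plus: "Ee j (t + 2*pi) = Ee j t" by (simp add: Ee_def fr_plus kr_def)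
lemma Ee_shift: "Ee j (t + 2*pi * of_int m) = Ee j t" by (simp add: Ee_def fr_shift kr_def)
lemma Ee_nonneg: "0 \<le> Ee j t" by (simp add: Ee_def)
lemma Ee_pos_iff: "0 < Ee j t \<longleftrightarrow> fr t \<noteq> 0" by (simp add: Ee_def)

lemma k_isCont: "j \<le> n \<Longrightarrow> 0 < t \<Longrightarrow> t < 2*pi \<Longrightarrow> isCont (k j) t"
proof -
  assume j: "j \<le> n" and t: "0 < t" "t < 2*pi"
  obtain k' k'' where kk: "\<forall>t\<in>{0<..<2*pi}.
      (k j has_real_derivative k' t) (at t) \<and> (k' has_real_derivative k'' t) (at t) \<and> k'' t < 0"
    using C2[OF j] by blast
  hence "(k j has_real_derivative k' t) (at t)" using t by auto
  thus ?thesis by (rule DERIV_isCont)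
qed

lemma Ee_cont_inner: "j \<le> n \<Longrightarrow> 0 < t \<Longrightarrow> t < 2*pi \<Longrightarrow> isCont (Ee j) t"
proof -
  assume j: "j \<le> n" and t: "0 < t" "t < 2*pi"
  have ev: "\<forall>\<^sub>F s in nhds t. Ee j s = exp (k j s)"
  proof -
    have "\<forall>\<^sub>F s in nhds t. s \<in> {0<..<2*pi}"
      using t by (intro eventually_nhds_in_open) auto
    thus ?thesis by eventually_elim (auto simp: Ee_def fr_id kr_id)
  qed
  have "isCont (\<lambda>s. exp (k j s)) t" using k_isCont[OF j t] by (rule isCont_exp')
  thus ?thesis using isCont_cong[OF ev] by simp
qed

lemma Ee_cont_zero: "j \<le> n \<Longrightarrow> isCont (Ee j) 0"
proof -
  assume j: "j \<le> n"
  have E0: "Ee j 0 = 0" by (simp add: Ee_def fr_id)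
  have r: "(Ee j \<longlongrightarrow> 0) (at_right 0)"
  proof -
    have "((\<lambda>s. exp (k j s)) \<longlongrightarrow> 0) (at_right 0)"
      using filterlim_compose[OF exp_at_bot lim_right[OF j]] by (simp add: o_def)
    moreover have "\<forall>\<^sub>F s in at_right 0. exp (k j s) = Ee j s"
    proof -
      have "\<forall>\<^sub>F s in at_right 0. s \<in> {0<..<2*pi::real}" by (rule eventually_at_right_real) simp
      thus ?thesis by eventually_elim (auto simp: Ee_def fr_id kr_id)
    qed
    ultimately show ?thesis by (rule Lim_transform_eventually)
  qed
  have l: "(Ee j \<longlongrightarrow> 0) (at_left 0)"
  proof -
    have sh: "filterlim (\<lambda>s. s + 2*pi) (at_left (2*pi)) (at_left (0::real))"
    proof -
      have "((\<lambda>s. s + 2*pi) \<longlongrightarrow> 0 + 2*pi) (at_left (0::real))"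
        by (intro tendsto_intros)
      moreover have "\<forall>\<^sub>F s in at_left (0::real). s + 2*pi \<in> {..<2*pi} - {2*pi}"
      proof -
        have "\<forall>\<^sub>F s in at_left 0. s \<in> {-1<..<0::real}" by (rule eventually_at_left_real) simp
        thus ?thesis by eventually_elim auto
      qed
      ultimately show ?thesis unfolding filterlim_at by (auto elim: eventually_mono)
    qed
    have "((\<lambda>s. exp (k j (s + 2*pi))) \<longlongrightarrow> 0) (at_left 0)"
      using filterlim_compose[OF exp_at_bot filterlim_compose[OF lim_left[OF j] sh]] by (simp add: o_def)
    moreover have "\<forall>\<^sub>F s in at_left 0. exp (k j (s + 2*pi)) = Ee j s"
    proof -
      have "\<forall>\<^sub>F s in at_left 0. s \<in> {-2*pi<..<0::real}" by (rule eventually_at_left_real) simp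
      thus ?thesis
      proof eventually_elim
        case (elim s)
        hence "0 < s + 2*pi" "s + 2*pi < 2*pi" by auto
        hence "Ee j (s + 2*pi) = exp (k j (s + 2*pi))" by (simp add: Ee_def fr_id kr_id)
        thus ?case using Ee_plus[of j s] by simp
      qed
    qed
    ultimately show ?thesis by (rule Lim_transform_eventually)
  qed
  have "(Ee j \<longlongrightarrow> 0) (at 0)" using l r by (rule filterlim_split_at_real)
  thus ?thesis unfolding isCont_def E0 .
qed

lemma Ee_cont: "j \<le> n \<Longrightarrow> isCont (Ee j) t"
proof -
  assume j: "j \<le> n"
  define m where "m = \<lfloor>t/(2*pi)\<rfloor>"
  have tf: "t - 2*pi * of_int m = fr t" by (simp add: fr_def m_def)
  have c0: "isCont (Ee j) (fr t)"
  proof (cases "fr t = 0")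
    case True thus ?thesis using Ee_cont_zero[OF j] by simp
  next
    case False thus ?thesis using Ee_cont_inner[OF j] fr_ge0[of t] fr_less[of t] by simp
  qed
  have ci: "isCont (\<lambda>s. s - 2*pi * of_int m) t" by (intro continuous_intros)
  have "isCont (\<lambda>s. Ee j (s - 2*pi * of_int m)) t"
    using isCont_o2[OF ci] c0 tf by simp
  moreover have "(\<lambda>s. Ee j (s - 2*pi * of_int m)) = Ee j"
  proof
    fix s show "Ee j (s - 2*pi * of_int m) = Ee j s"
      using Ee_shift[of j "s - 2*pi * of_int m" m] by simp
  qed
  ultimately show ?thesis by simp
qed

end

lemma sum_not_pinf: "finite A \<Longrightarrow> (\<forall>x\<in>A. f x \<noteq> (\<infinity>::ereal)) \<Longrightarrow> sum f A \<noteq> \<infinity>"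
proof (induction A rule: finite_induct)
  case empty thus ?case by simp
next
  case (insert x F)
  hence "f x \<noteq> \<infinity>" "sum f F \<noteq> \<infinity>" by auto
  thus ?case using insert by (cases "f x"; cases "sum f F") auto
qed

lemma sum_minf: "finite A \<Longrightarrow> a \<in> A \<Longrightarrow> f a = -\<infinity> \<Longrightarrow> (\<forall>x\<in>A. f x \<noteq> (\<infinity>::ereal)) \<Longrightarrow> sum f A = -\<infinity>"
proof -
  assume A: "finite A" "a \<in> A" "f a = -\<infinity>" "\<forall>x\<in>A. f x \<noteq> \<infinity>"
  have "sum f A = f a + sum f (A - {a})" using A by (simp add: sum.remove)
  moreover have "sum f (A - {a}) \<noteq> \<infinity>" using A by (intro sum_not_pinf) auto
  ultimately show ?thesis using A by (cases "sum f (A - {a})") auto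
qed

lemma fr_zero_iff: "-2*pi < s \<Longrightarrow> s < 2*pi \<Longrightarrow> fr s = 0 \<longleftrightarrow> s = 0"
proof -
  assume s: "-2*pi < s" "s < 2*pi"
  show ?thesis
  proof (cases "0 \<le> s")
    case True thus ?thesis using s fr_id by auto
  next
    case False
    hence "fr s = s + 2*pi" using fr_plus[of s] fr_id[of "s + 2*pi"] s by auto
    thus ?thesis using False s by auto
  qed
qed


context kern begin

definition Fs :: "(nat \<Rightarrow> real) \<Rightarrow> real \<Rightarrow> ereal" where
  "Fs u t = (\<Sum>i\<in>{0..n}. K i (t - u i))"
definition nf :: "(nat \<Rightarrow> real) \<Rightarrow> real \<Rightarrow> bool" where
  "nf u t \<longleftrightarrow> (\<forall>i\<le>n. fr (t - u i) \<noteq> 0)"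
definition fre :: "(nat \<Rightarrow> real) \<Rightarrow> real \<Rightarrow> real" where
  "fre u t = (\<Sum>i\<in>{0..n}. kr i (t - u i))"
definition P :: "(nat \<Rightarrow> real) \<Rightarrow> real \<Rightarrow> real" where
  "P u t = (\<Prod>i\<in>{0..n}. Ee i (t - u i))"

lemma Fs_nf: "nf u t \<Longrightarrow> Fs u t = ereal (fre u t)"
proof -
  assume h: "nf u t"
  have "Fs u t = (\<Sum>i\<in>{0..n}. ereal (kr i (t - u i)))"
    unfolding Fs_def using h by (intro sum.cong refl) (auto simp: nf_def K_eq)
  thus ?thesis by (simp add: sum_ereal fre_def)
qed

lemma Fs_node: "\<not> nf u t \<Longrightarrow> Fs u t = -\<infinity>"
proof -
  assume h: "\<not> nf u t"
  then obtain i where i: "i \<le> n" "fr (t - u i) = 0" by (auto simp: nf_def)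
  show ?thesis unfolding Fs_def
    by (rule sum_minf[of _ i]) (use i in \<open>auto simp: K_eq\<close>)
qed

lemma P_nf: "nf u t \<Longrightarrow> P u t = exp (fre u t)"
proof -
  assume h: "nf u t"
  have "P u t = (\<Prod>i\<in>{0..n}. exp (kr i (t - u i)))"
    unfolding P_def using h by (intro prod.cong refl) (auto simp: nf_def Ee_def)
  thus ?thesis by (simp add: exp_sum fre_def)
qed

lemma P_node: "\<not> nf u t \<Longrightarrow> P u t = 0"
proof -
  assume h: "\<not> nf u t"
  then obtain i where i: "i \<le> n" "fr (t - u i) = 0" by (auto simp: nf_def)
  show ?thesis unfolding P_def using i by (intro prod_zero) (auto simp: Ee_def intro!: bexI[of _ i])
qed

lemma P_pos_iff: "0 < P u t \<longleftrightarrow> nf u t"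
  using P_nf[of u t] P_node[of u t] by (cases "nf u t") auto

lemma P_nonneg: "0 \<le> P u t"
  unfolding P_def by (intro prod_nonneg) (auto simp: Ee_nonneg)

lemma P_isCont: "isCont (P u) t"
proof -
  have "isCont (\<lambda>t. Ee i (t - u i)) t" if i: "i \<in> {0..n}" for i
  proof -
    have c1: "isCont (\<lambda>t. t - u i) t" by (intro continuous_intros)
    have "isCont (Ee i) ((\<lambda>t. t - u i) t)" using Ee_cont i by simp
    from isCont_o2[OF c1 this] show ?thesis .
  qed
  hence "isCont (\<lambda>t. \<Prod>i\<in>{0..n}. Ee i (t - u i)) t" by (rule continuous_prod)
  thus ?thesis by (simp add: P_def[abs_def])
qed

lemma P_cont_on: "continuous_on S (P u)"
  by (intro continuous_at_imp_continuous_on ballI P_isCont)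

lemma Fs_le_iff: "nf u z \<Longrightarrow> P u t \<le> P u z \<Longrightarrow> Fs u t \<le> Fs u z"
proof (cases "nf u t")
  case True
  assume z: "nf u z" "P u t \<le> P u z"
  hence "fre u t \<le> fre u z" using True by (simp add: P_nf)
  thus ?thesis using True z by (simp add: Fs_nf)
next
  case False thus ?thesis by (simp add: Fs_node)
qed

definition Q :: "(nat \<Rightarrow> real) set" where
  "Q = {u. u 0 = 0 \<and> u (Suc n) = 2*pi \<and> (\<forall>i\<le>n. u i \<le> u (Suc i))}"

lemma Q_mono: "u \<in> Q \<Longrightarrow> i \<le> j \<Longrightarrow> j \<le> Suc n \<Longrightarrow> u i \<le> u j"
proof (induction j)
  case 0 thus ?case by simp
next
  case (Suc j)
  show ?case
  proof (cases "i = Suc j")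
    case True thus ?thesis by simp
  next
    case False
    hence "u i \<le> u j" using Suc by auto
    moreover have "u j \<le> u (Suc j)" using Suc by (auto simp: Q_def)
    ultimately show ?thesis by simp
  qed
qed

lemma Q_bounds: "u \<in> Q \<Longrightarrow> i \<le> Suc n \<Longrightarrow> 0 \<le> u i \<and> u i \<le> 2*pi"
  using Q_mono[of u 0 i] Q_mono[of u i "Suc n"] by (auto simp: Q_def)

lemma nf_inside:
  assumes u: "u \<in> Q" and q: "q \<le> n" and t: "u q < t" "t < u (Suc q)"
  shows "nf u t"
  unfolding nf_def
proof (intro allI impI)
  fix i assume i: "i \<le> n"
  have b: "0 \<le> u i" "u i \<le> 2*pi" "0 \<le> u q" "u (Suc q) \<le> 2*pi" using Q_bounds[OF u] i q by auto
  have "u i \<le> u q \<or> u (Suc q) \<le> u i"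
  proof (cases "i \<le> q")
    case True
    have "u i \<le> u q" by (rule Q_mono[OF u True]) (use q in simp)
    thus ?thesis ..
  next
    case False
    hence "Suc q \<le> i" by simp
    have "u (Suc q) \<le> u i" by (rule Q_mono[OF u \<open>Suc q \<le> i\<close>]) (use i in simp)
    thus ?thesis ..
  qed
  hence ne: "t - u i \<noteq> 0" using t by auto
  have r: "-2*pi < t - u i" "t - u i < 2*pi" using b t by linarith+
  show "fr (t - u i) \<noteq> 0" using fr_zero_iff[OF r] ne by simp
qed

lemma not_nf_node: "q \<le> n \<Longrightarrow> \<not> nf u (u q)"
proof -
  assume q: "q \<le> n"
  have "fr (u q - u q) = 0" by (simp add: fr_id)
  thus ?thesis using q unfolding nf_def by blast
qed

lemma not_nf_top: "u \<in> Q \<Longrightarrow> \<not> nf u (u (Suc n))"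
proof -
  assume u: "u \<in> Q"
  have "fr (u (Suc n) - u 0) = 0" using u fr_plus[of 0] by (simp add: Q_def fr_id)
  thus ?thesis unfolding nf_def by blast
qed

lemma not_nf_right: "u \<in> Q \<Longrightarrow> q \<le> n \<Longrightarrow> \<not> nf u (u (Suc q))"
proof -
  assume u: "u \<in> Q" and q: "q \<le> n"
  show ?thesis
  proof (cases "q = n")
    case True thus ?thesis using not_nf_top[OF u] by simp
  next
    case False thus ?thesis using not_nf_node[of "Suc q" u] q by simp
  qed
qed

definition Mx :: "(nat \<Rightarrow> real) \<Rightarrow> nat \<Rightarrow> ereal" where
  "Mx u q = (SUP t\<in>{u q..u (Suc q)}. Fs u t)"

definition Pm :: "(nat \<Rightarrow> real) \<Rightarrow> nat \<Rightarrow> real" where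
  "Pm u q = Sup (P u ` {u q..u (Suc q)})"

lemma maximizer:
  assumes u: "u \<in> Q" and q: "q \<le> n" and lt: "u q < u (Suc q)"
  shows "\<exists>z. u q < z \<and> z < u (Suc q) \<and> nf u z \<and> (\<forall>t\<in>{u q..u (Suc q)}. P u t \<le> P u z)
     \<and> (\<forall>t\<in>{u q..u (Suc q)}. Fs u t \<le> Fs u z) \<and> Mx u q = Fs u z \<and> Pm u q = P u z"
proof -
  obtain z where z: "z \<in> {u q..u (Suc q)}" "\<forall>t\<in>{u q..u (Suc q)}. P u t \<le> P u z"
    using continuous_attains_sup[of "{u q..u (Suc q)}" "P u"] lt by (auto simp: P_cont_on)
  define mid where "mid = (u q + u (Suc q)) / 2"
  have mid: "u q < mid" "mid < u (Suc q)" using lt by (auto simp: mid_def)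
  have "0 < P u mid" using nf_inside[OF u q mid] by (simp add: P_pos_iff)
  moreover have "P u mid \<le> P u z" using z mid by auto
  ultimately have nz: "nf u z" using P_pos_iff by (meson less_le_trans)
  have z1: "z \<noteq> u q" using nz not_nf_node[OF q] by auto
  have z2: "z \<noteq> u (Suc q)" using nz not_nf_right[OF u q] by auto
  have Fz: "\<forall>t\<in>{u q..u (Suc q)}. Fs u t \<le> Fs u z" using z nz Fs_le_iff by auto
  have m1: "Mx u q \<le> Fs u z" unfolding Mx_def by (rule SUP_least) (use Fz in blast)
  have m2: "Fs u z \<le> Mx u q" unfolding Mx_def by (rule SUP_upper) (use z in blast)
  have "Mx u q = Fs u z" using m1 m2 by (rule antisym)
  moreover have "Pm u q = P u z" unfolding Pm_def
    by (rule cSup_eq_maximum) (use z in auto)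
  moreover have "u q < z" "z < u (Suc q)" using z z1 z2 by auto
  ultimately show ?thesis using z nz Fz by (intro exI[of _ z]) auto
qed

lemma Mx_degenerate: "u \<in> Q \<Longrightarrow> q \<le> n \<Longrightarrow> u q = u (Suc q) \<Longrightarrow> Mx u q = -\<infinity>"
proof -
  assume h: "u \<in> Q" "q \<le> n" "u q = u (Suc q)"
  have "Mx u q = Fs u (u q)" unfolding Mx_def h(3)[symmetric] by simp
  thus ?thesis using Fs_node not_nf_node[OF h(2)] by simp
qed

lemma cover:
  assumes u: "u \<in> Q" and t: "0 \<le> t" "t \<le> 2*pi"
  shows "\<exists>q\<le>n. u q \<le> t \<and> t \<le> u (Suc q)"
proof -
  have "m \<le> n \<Longrightarrow> t \<le> u (Suc m) \<Longrightarrow> \<exists>q\<le>m. u q \<le> t \<and> t \<le> u (Suc q)" for m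
  proof (induction m)
    case 0 thus ?case using u t by (auto simp: Q_def)
  next
    case (Suc m)
    show ?case
    proof (cases "t \<le> u (Suc m)")
      case True thus ?thesis using Suc by (metis Suc_leD le_SucI)
    next
      case False thus ?thesis using Suc by (intro exI[of _ "Suc m"]) auto
    qed
  qed
  thus ?thesis using u t by (auto simp: Q_def)
qed

end

context kern begin

lemma kr_shift2: "kr j (t + 2*pi - c) = kr j (t - c)"
proof -
  have "t + 2*pi - c = (t - c) + 2*pi" by simp
  thus ?thesis by (simp only: kr_plus)
qed

lemma Q_upd:
  assumes x: "x \<in> Q" and p: "p < n" and a: "x p \<le> a" "a \<le> x (Suc (Suc p))"
  shows "x(Suc p := a) \<in> Q"
  unfolding Q_def
proof (intro CollectI conjI allI impI)
  show "(x(Suc p := a)) 0 = 0" using x by (simp add: Q_def)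
  show "(x(Suc p := a)) (Suc n) = 2*pi" using x p by (simp add: Q_def)
  fix i assume i: "i \<le> n"
  have xi: "x i \<le> x (Suc i)" using x i by (simp add: Q_def)
  show "(x(Suc p := a)) i \<le> (x(Suc p := a)) (Suc i)"
  proof (cases "i = Suc p")
    case True thus ?thesis using a by simp
  next
    case False
    show ?thesis
    proof (cases "Suc i = Suc p")
      case True thus ?thesis using a False by simp
    next
      case False2: False
      thus ?thesis using False xi by simp
    qed
  qed
qed

lemma SUP_up: "t \<in> {a..b} \<Longrightarrow> Fs u t \<le> (SUP s\<in>{a..b}. Fs u s)"
  by (rule SUP_upper)

lemma bal_mono:
  assumes x: "x \<in> Q" and x': "x' \<in> Q" and p: "p < n"
    and le: "\<And>j. j \<le> Suc n \<Longrightarrow> j \<noteq> Suc p \<Longrightarrow> x j \<le> x' j"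
    and a: "x p < a" "a < x (Suc (Suc p))"
    and b: "x' p < b" "b < x' (Suc (Suc p))"
    and ba: "Mx (x(Suc p := a)) p = Mx (x(Suc p := a)) (Suc p)"
    and bb: "Mx (x'(Suc p := b)) p = Mx (x'(Suc p := b)) (Suc p)"
  shows "a \<le> b"
proof (rule ccontr)
  assume "\<not> a \<le> b"
  hence ba_lt: "b < a" by simp
  define y where "y = x(Suc p := a)"
  define y' where "y' = x'(Suc p := b)"
  have yQ: "y \<in> Q" unfolding y_def by (rule Q_upd[OF x p]) (use a in auto)
  have yQ': "y' \<in> Q" unfolding y'_def by (rule Q_upd[OF x' p]) (use b in auto)
  have pn: "Suc p \<le> n" "p \<le> n" using p by auto
  have y_p: "y p = x p" "y (Suc p) = a" "y (Suc (Suc p)) = x (Suc (Suc p))" by (auto simp: y_def)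
  have y'_p: "y' p = x' p" "y' (Suc p) = b" "y' (Suc (Suc p)) = x' (Suc (Suc p))" by (auto simp: y'_def)
  obtain z where z: "a < z" "z < x (Suc (Suc p))" "nf y z" "Mx y (Suc p) = Fs y z"
    using maximizer[OF yQ pn(1)] y_p a by auto
  obtain z' where z': "x' p < z'" "z' < b" "nf y' z'" "Mx y' p = Fs y' z'"
    using maximizer[OF yQ' pn(2)] y'_p b by auto
  have xle: "x (Suc (Suc p)) \<le> x' (Suc (Suc p))" "x p \<le> x' p" using le p by auto
  have nf1: "nf y' z" by (rule nf_inside[OF yQ' pn(1)]) (use y'_p z ba_lt xle in auto)
  have nf2: "nf y z'" by (rule nf_inside[OF yQ pn(2)]) (use y_p z' ba_lt xle in auto)
  have F1: "Fs y' z \<le> Mx y' (Suc p)" unfolding Mx_def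
    by (rule SUP_up) (use y'_p z ba_lt xle in auto)
  have F2: "Fs y z' \<le> Mx y p" unfolding Mx_def
    by (rule SUP_up) (use y_p z' ba_lt xle in auto)
  have r1: "fre y' z \<le> fre y' z'"
    using F1 bb z'(4) nf1 z'(3) by (simp add: Fs_nf y'_def)
  have r2: "fre y z' \<le> fre y z"
    using F2 ba z(4) nf2 z(3) by (simp add: Fs_nf y_def)
  have z_lt: "z < 2*pi" using z(2) Q_bounds[OF x, of "Suc (Suc p)"] p by auto
  have z'_pos: "0 < z'" using z'(1) Q_bounds[OF x', of p] p by auto
  have tm: "kr i (z' - y' i) - kr i (z' - y i) \<le> kr i (z - y' i) - kr i (z - y i)
      \<and> (i = Suc p \<longrightarrow> kr i (z' - y' i) - kr i (z' - y i) < kr i (z - y' i) - kr i (z - y i))"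
    if i: "i \<in> {0..n}" for i
  proof (cases "i = Suc p")
    case True
    have "kr i (z - a) - kr i (z - b) < kr i (z' + 2*pi - a) - kr i (z' + 2*pi - b)"
      by (rule Mono) (use i ba_lt z z_lt z' z'_pos in auto)
    hence "kr i (z' - b) - kr i (z' - a) < kr i (z - b) - kr i (z - a)"
      by (simp add: kr_shift2)
    thus ?thesis using True y_p y'_p by simp
  next
    case False
    have yi: "y i = x i" "y' i = x' i" using False by (auto simp: y_def y'_def)
    have lei: "x i \<le> x' i" using le False i by auto
    show ?thesis
    proof (cases "x i = x' i")
      case True thus ?thesis using False yi by simp
    next
      case ne: False
      hence lt: "x i < x' i" using lei by simp
      have bi: "0 \<le> x i" "x' i \<le> 2*pi" using Q_bounds[OF x, of i] Q_bounds[OF x', of i] i by auto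
      show ?thesis
      proof (cases "i \<le> p")
        case True
        have "x' i \<le> x' p" using Q_mono[OF x' True] p by simp
        hence "kr i (z' - x' i) - kr i (z' - x i) < kr i (z - x' i) - kr i (z - x i)"
          by (intro Mono) (use i lt z z_lt z' z'_pos ba_lt bi in auto)
        thus ?thesis using yi False by simp
      next
        case False2: False
        hence "Suc (Suc p) \<le> i" using False by simp
        hence "x (Suc (Suc p)) \<le> x i" using Q_mono[OF x] i by simp
        hence "kr i (z' + 2*pi - x' i) - kr i (z' + 2*pi - x i) < kr i (z + 2*pi - x' i) - kr i (z + 2*pi - x i)"
          by (intro Mono) (use i lt z z_lt z' z'_pos ba_lt bi in auto)
        hence "kr i (z' - x' i) - kr i (z' - x i) < kr i (z - x' i) - kr i (z - x i)"
          by (simp add: kr_shift2)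
        thus ?thesis using yi False by simp
      qed
    qed
  qed
  have "(\<Sum>i\<in>{0..n}. kr i (z' - y' i) - kr i (z' - y i)) < (\<Sum>i\<in>{0..n}. kr i (z - y' i) - kr i (z - y i))"
  proof (rule sum_strict_mono_ex1)
    show "\<forall>i\<in>{0..n}. kr i (z' - y' i) - kr i (z' - y i) \<le> kr i (z - y' i) - kr i (z - y i)"
      using tm by blast
    have "Suc p \<in> {0..n}" using pn by simp
    thus "\<exists>i\<in>{0..n}. kr i (z' - y' i) - kr i (z' - y i) < kr i (z - y' i) - kr i (z - y i)"
      using tm[of "Suc p"] by blast
  qed simp
  hence "fre y' z' - fre y z' < fre y' z - fre y z"
    by (simp add: fre_def sum_subtractf)
  thus False using r1 r2 by simp
qed

end

lemma contSup01:
  fixes H :: "real \<Rightarrow> real \<Rightarrow> real"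
  assumes c: "\<And>z. isCont (\<lambda>z. H (fst z) (snd z)) z"
  shows "continuous_on {A..B} (\<lambda>a. Sup (H a ` {0..1}))"
proof -
  let ?C = "{A..B} \<times> {0..1::real}"
  have cC: "continuous_on ?C (\<lambda>z. H (fst z) (snd z))"
    by (intro continuous_at_imp_continuous_on ballI c)
  have uc: "uniformly_continuous_on ?C (\<lambda>z. H (fst z) (snd z))"
    by (rule compact_uniformly_continuous[OF cC]) (intro compact_Times compact_Icc)
  have bdd: "bdd_above (H a ` {0..1})" for a
  proof -
    have "continuous_on {0..1} (\<lambda>s. H a s)"
    proof (intro continuous_at_imp_continuous_on ballI)
      fix s :: real
      have "isCont (\<lambda>s. Pair a s) s" by (intro continuous_intros)
      from isCont_o2[OF this c[of "(a, s)"]] show "isCont (H a) s" by simp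
    qed
    hence "compact (H a ` {0..1})" by (intro compact_continuous_image) auto
    thus ?thesis by (intro bounded_imp_bdd_above compact_imp_bounded)
  qed
  show ?thesis
    unfolding continuous_on_iff
  proof (intro ballI allI impI)
    fix a0 e :: real assume a0: "a0 \<in> {A..B}" and e: "0 < e"
    obtain d where d: "d > 0" and dd: "\<forall>z\<in>?C. \<forall>z'\<in>?C. dist z' z < d \<longrightarrow>
        dist (H (fst z') (snd z')) (H (fst z) (snd z)) < e/2"
      using uc e unfolding uniformly_continuous_on_def by (meson half_gt_zero)
    show "\<exists>d>0. \<forall>a\<in>{A..B}. dist a a0 < d \<longrightarrow> dist (Sup (H a ` {0..1})) (Sup (H a0 ` {0..1})) < e"
    proof (intro exI[of _ d] conjI ballI impI d)
      fix a assume a: "a \<in> {A..B}" and da: "dist a a0 < d"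
      have close: "\<bar>H a s - H a0 s\<bar> < e/2" if s: "s \<in> {0..1}" for s
      proof -
        have "dist (a, s) (a0, s) < d" using da by (simp add: dist_Pair_Pair)
        hence "dist (H a s) (H a0 s) < e/2" using dd a a0 s by force
        thus ?thesis by (simp add: dist_real_def)
      qed
      have ne: "H a ` {0..1} \<noteq> {}" "H a0 ` {0..1} \<noteq> {}" by auto
      have s1: "Sup (H a ` {0..1}) \<le> Sup (H a0 ` {0..1}) + e/2"
      proof (rule cSUP_least)
        fix s assume s: "s \<in> {0..1::real}"
        have "H a0 s \<le> Sup (H a0 ` {0..1})" using bdd s by (intro cSUP_upper) auto
        thus "H a s \<le> Sup (H a0 ` {0..1}) + e/2" using close[OF s] unfolding abs_less_iff by linarith
      qed simp
      have s2: "Sup (H a0 ` {0..1}) \<le> Sup (H a ` {0..1}) + e/2"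
      proof (rule cSUP_least)
        fix s assume s: "s \<in> {0..1::real}"
        have "H a s \<le> Sup (H a ` {0..1})" using bdd s by (intro cSUP_upper) auto
        thus "H a0 s \<le> Sup (H a ` {0..1}) + e/2" using close[OF s] unfolding abs_less_iff by linarith
      qed simp
      show "dist (Sup (H a ` {0..1})) (Sup (H a0 ` {0..1})) < e"
        using s1 s2 e by (simp add: dist_real_def abs_le_iff)
    qed
  qed
qed

lemma affine_img: "\<alpha> \<le> (\<beta>::real) \<Longrightarrow> (\<lambda>s. (\<beta> - \<alpha>) * s + \<alpha>) ` {0..1} = {\<alpha>..\<beta>}"
  by (subst image_affinity_atLeastAtMost) auto

context kern begin

lemma upd_isCont: "isCont (\<lambda>z. (x(j := fst z)) i) (z::real\<times>real)"
  by (cases "i = j") (auto intro: continuous_intros)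

lemma H_isCont:
  assumes "isCont (\<lambda>z::real\<times>real. g z) z"
  shows "isCont (\<lambda>z. P (x(j := fst z)) (g z)) z"
proof -
  have "isCont (\<lambda>z. Ee i (g z - (x(j := fst z)) i)) z" if i: "i \<in> {0..n}" for i
  proof -
    have c1: "isCont (\<lambda>z. g z - (x(j := fst z)) i) z"
      by (intro continuous_intros assms upd_isCont)
    have "isCont (Ee i) ((\<lambda>z. g z - (x(j := fst z)) i) z)" using Ee_cont i by simp
    from isCont_o2[OF c1 this] show ?thesis .
  qed
  hence "isCont (\<lambda>z. \<Prod>i\<in>{0..n}. Ee i (g z - (x(j := fst z)) i)) z" by (rule continuous_prod)
  thus ?thesis by (simp add: P_def)
qed

lemma uniq_pair:
  assumes x: "x \<in> Q" and x': "x' \<in> Q"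
    and le: "\<And>i. i \<le> n \<Longrightarrow> x i \<le> x' i"
    and sx: "\<And>q. q \<le> n \<Longrightarrow> x q < x (Suc q)" and sx': "\<And>q. q \<le> n \<Longrightarrow> x' q < x' (Suc q)"
    and ex: "\<And>q. q \<le> n \<Longrightarrow> Mx x q = Mx x 0" and ex': "\<And>q. q \<le> n \<Longrightarrow> Mx x' q = Mx x' 0"
  shows "\<And>i. i \<le> n \<Longrightarrow> x i = x' i"
proof (rule ccontr)
  fix i0 assume i0: "i0 \<le> n" "x i0 \<noteq> x' i0"
  have x0: "x 0 = 0" "x' 0 = 0" "x (Suc n) = 2*pi" "x' (Suc n) = 2*pi" using x x' by (auto simp: Q_def)
  obtain z0 where z0: "0 < z0" "z0 < x (Suc 0)" "nf x z0" "Mx x 0 = Fs x z0"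
    using maximizer[OF x _ sx[of 0]] x0 by auto
  obtain zn where zn: "x' n < zn" "zn < 2*pi" "nf x' zn" "Mx x' n = Fs x' zn"
    using maximizer[OF x' _ sx'[of n]] x0 by auto
  have x1: "x (Suc 0) \<le> x' (Suc 0)"
  proof (cases "n = 0")
    case True thus ?thesis using x0 by simp
  next
    case False thus ?thesis using le[of "Suc 0"] by simp
  qed
  have nf1: "nf x' z0" by (rule nf_inside[OF x', of 0]) (use z0 x0 x1 in auto)
  have xn: "x n \<le> x' n" using le by simp
  have nf2: "nf x zn" by (rule nf_inside[OF x, of n]) (use zn x0 xn in auto)
  have z0b: "z0 \<le> 2*pi" using z0(2) Q_bounds[OF x, of "Suc 0"] by simp
  obtain q where q: "q \<le> n" "x' q \<le> z0" "z0 \<le> x' (Suc q)"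
    using cover[OF x', of z0] z0 z0b by auto
  have F1: "Fs x' z0 \<le> Fs x' zn"
  proof -
    have "Fs x' z0 \<le> Mx x' q" unfolding Mx_def by (rule SUP_up) (use q in auto)
    thus ?thesis using ex'[OF q(1)] ex'[of n] zn(4) by simp
  qed
  have zn0: "0 \<le> zn" using zn(1) Q_bounds[OF x', of n] by simp
  obtain q' where q': "q' \<le> n" "x q' \<le> zn" "zn \<le> x (Suc q')"
    using cover[OF x, of zn] zn zn0 by auto
  have F2: "Fs x zn \<le> Fs x z0"
  proof -
    have "Fs x zn \<le> Mx x q'" unfolding Mx_def by (rule SUP_up) (use q' in auto)
    thus ?thesis using ex[OF q'(1)] z0(4) by simp
  qed
  have r1: "fre x' z0 \<le> fre x' zn" using F1 nf1 zn(3) by (simp add: Fs_nf)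
  have r2: "fre x zn \<le> fre x z0" using F2 nf2 z0(3) by (simp add: Fs_nf)
  have tm: "kr i (zn - x' i) - kr i (zn - x i) \<le> kr i (z0 - x' i) - kr i (z0 - x i)
      \<and> (x i \<noteq> x' i \<longrightarrow> kr i (zn - x' i) - kr i (zn - x i) < kr i (z0 - x' i) - kr i (z0 - x i))"
    if i: "i \<in> {0..n}" for i
  proof (cases "x i = x' i")
    case True thus ?thesis by simp
  next
    case False
    hence lt: "x i < x' i" using le[of i] i by simp
    have i1: "Suc 0 \<le> i" using False x0 by (cases i) auto
    have "x (Suc 0) \<le> x i" using Q_mono[OF x i1] i by simp
    moreover have "x' i \<le> x' n" using Q_mono[OF x', of i n] i by simp
    ultimately have "kr i (zn - x' i) - kr i (zn - x i) < kr i (z0 + 2*pi - x' i) - kr i (z0 + 2*pi - x i)"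
      by (intro Mono) (use i lt z0 zn in auto)
    thus ?thesis by (simp add: kr_shift2)
  qed
  have "(\<Sum>i\<in>{0..n}. kr i (zn - x' i) - kr i (zn - x i)) < (\<Sum>i\<in>{0..n}. kr i (z0 - x' i) - kr i (z0 - x i))"
  proof (rule sum_strict_mono_ex1)
    show "\<forall>i\<in>{0..n}. kr i (zn - x' i) - kr i (zn - x i) \<le> kr i (z0 - x' i) - kr i (z0 - x i)"
      using tm by blast
    have "i0 \<in> {0..n}" using i0 by simp
    thus "\<exists>i\<in>{0..n}. kr i (zn - x' i) - kr i (zn - x i) < kr i (z0 - x' i) - kr i (z0 - x i)"
      using tm[of i0] i0 by blast
  qed simp
  hence "fre x' zn - fre x zn < fre x' z0 - fre x z0"
    by (simp add: fre_def sum_subtractf)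
  thus False using r1 r2 by simp
qed

end

context kern begin

lemma bal_exists:
  assumes x: "x \<in> Q" and p: "p < n" and lc: "x p < x (Suc (Suc p))"
  shows "\<exists>a. x p < a \<and> a < x (Suc (Suc p)) \<and> Mx (x(Suc p := a)) p = Mx (x(Suc p := a)) (Suc p)"
proof -
  define lo where "lo = x p"
  define hi where "hi = x (Suc (Suc p))"
  have lc': "lo < hi" using lc by (simp add: lo_def hi_def)
  define GL where "GL a = Sup ((\<lambda>s. P (x(Suc p := a)) ((a - lo) * s + lo)) ` {0..1})" for a
  define GR where "GR a = Sup ((\<lambda>s. P (x(Suc p := a)) ((hi - a) * s + a)) ` {0..1})" for a
  have yv: "(x(Suc p := a)) p = lo" "(x(Suc p := a)) (Suc p) = a" "(x(Suc p := a)) (Suc (Suc p)) = hi" for a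
    by (auto simp: lo_def hi_def)
  have yQ: "x(Suc p := a) \<in> Q" if "a \<in> {lo..hi}" for a
    by (rule Q_upd[OF x p]) (use that in \<open>auto simp: lo_def hi_def\<close>)
  have PmL: "Pm (x(Suc p := a)) p = GL a" if "a \<in> {lo..hi}" for a
  proof -
    have e: "{lo..a} = (\<lambda>s. (a - lo) * s + lo) ` {0..1}" using affine_img[of lo a] that by simp
    show ?thesis unfolding Pm_def GL_def yv e image_image ..
  qed
  have PmR: "Pm (x(Suc p := a)) (Suc p) = GR a" if "a \<in> {lo..hi}" for a
  proof -
    have e: "{a..hi} = (\<lambda>s. (hi - a) * s + a) ` {0..1}" using affine_img[of a hi] that by simp
    show ?thesis unfolding Pm_def GR_def yv e image_image ..
  qed
  have cGL: "continuous_on {lo..hi} GL" unfolding GL_def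
    by (rule contSup01[where H = "\<lambda>a s. P (x(Suc p := a)) ((a - lo) * s + lo)"])
       (rule H_isCont[where g = "\<lambda>z. (fst z - lo) * snd z + lo"], intro continuous_intros)
  have cGR: "continuous_on {lo..hi} GR" unfolding GR_def
    by (rule contSup01[where H = "\<lambda>a s. P (x(Suc p := a)) ((hi - a) * s + a)"])
       (rule H_isCont[where g = "\<lambda>z. (hi - fst z) * snd z + fst z"], intro continuous_intros)
  define h where "h a = GR a - GL a" for a
  have ch: "continuous_on {lo..hi} h" unfolding h_def by (intro continuous_intros cGL cGR)
  have pn: "p \<le> n" "Suc p \<le> n" using p by auto
  have hl: "0 < h lo"
  proof -
    let ?y = "x(Suc p := lo)"
    have y: "?y \<in> Q" using yQ lc' by simp
    have "Pm ?y p = P ?y lo" unfolding Pm_def yv by simp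
    also have "\<dots> = 0" using P_node not_nf_node[OF pn(1), of ?y] yv by simp
    finally have a: "GL lo = 0" using PmL lc' by simp
    obtain z where z: "nf ?y z" "Pm ?y (Suc p) = P ?y z"
      using maximizer[OF y pn(2)] yv lc' by auto
    have "0 < P ?y z" using z(1) P_pos_iff by blast
    hence "0 < GR lo" using PmR[of lo] lc' z(2) by simp
    thus ?thesis using a by (simp add: h_def)
  qed
  have hc: "h hi < 0"
  proof -
    let ?y = "x(Suc p := hi)"
    have y: "?y \<in> Q" using yQ lc' by simp
    have "Pm ?y (Suc p) = P ?y hi" unfolding Pm_def yv by simp
    also have "\<dots> = 0" using P_node not_nf_node[OF pn(2), of ?y] yv by simp
    finally have a: "GR hi = 0" using PmR lc' by simp
    obtain z where z: "nf ?y z" "Pm ?y p = P ?y z"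
      using maximizer[OF y pn(1)] yv lc' by auto
    have "0 < P ?y z" using z(1) P_pos_iff by blast
    hence "0 < GL hi" using PmL[of hi] lc' z(2) by simp
    thus ?thesis using a by (simp add: h_def)
  qed
  obtain a where a: "lo \<le> a" "a \<le> hi" "h a = 0"
    using IVT2'[of h hi 0 lo, OF _ _ _ ch] hl hc lc' by auto
  have al: "a \<noteq> lo" using a hl by auto
  have ac: "a \<noteq> hi" using a hc by auto
  let ?y = "x(Suc p := a)"
  have y: "?y \<in> Q" using yQ a by simp
  obtain z1 where z1: "nf ?y z1" "Mx ?y p = Fs ?y z1" "Pm ?y p = P ?y z1"
    using maximizer[OF y pn(1)] yv a al by auto
  obtain z2 where z2: "nf ?y z2" "Mx ?y (Suc p) = Fs ?y z2" "Pm ?y (Suc p) = P ?y z2"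
    using maximizer[OF y pn(2)] yv a ac by auto
  have "Pm ?y p = Pm ?y (Suc p)" using PmL[of a] PmR[of a] a by (simp add: h_def)
  hence "exp (fre ?y z1) = exp (fre ?y z2)" using z1 z2 by (simp add: P_nf)
  hence "fre ?y z1 = fre ?y z2" by simp
  hence "Mx ?y p = Mx ?y (Suc p)" using z1 z2 by (simp add: Fs_nf)
  thus ?thesis using a al ac by (intro exI[of _ a]) (auto simp: lo_def hi_def)
qed

definition Tn :: "(nat \<Rightarrow> real) \<Rightarrow> nat \<Rightarrow> real" where
  "Tn x p = (if x p < x (Suc (Suc p))
     then (THE a. x p < a \<and> a < x (Suc (Suc p)) \<and> Mx (x(Suc p := a)) p = Mx (x(Suc p := a)) (Suc p))
     else x p)"

lemma bal_unique:
  assumes x: "x \<in> Q" and p: "p < n"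
    and a: "x p < a" "a < x (Suc (Suc p))" "Mx (x(Suc p := a)) p = Mx (x(Suc p := a)) (Suc p)"
    and b: "x p < b" "b < x (Suc (Suc p))" "Mx (x(Suc p := b)) p = Mx (x(Suc p := b)) (Suc p)"
  shows "a = b"
proof -
  have "a \<le> b" by (rule bal_mono[OF x x p _ a(1,2) b(1,2) a(3) b(3)]) simp
  moreover have "b \<le> a" by (rule bal_mono[OF x x p _ b(1,2) a(1,2) b(3) a(3)]) simp
  ultimately show ?thesis by simp
qed

lemma T_spec:
  assumes x: "x \<in> Q" and p: "p < n" and lc: "x p < x (Suc (Suc p))"
  shows "x p < Tn x p \<and> Tn x p < x (Suc (Suc p)) \<and> Mx (x(Suc p := Tn x p)) p = Mx (x(Suc p := Tn x p)) (Suc p)"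
proof -
  let ?R = "\<lambda>a. x p < a \<and> a < x (Suc (Suc p)) \<and> Mx (x(Suc p := a)) p = Mx (x(Suc p := a)) (Suc p)"
  have ex: "\<exists>!a. ?R a"
  proof -
    obtain a where "?R a" using bal_exists[OF x p lc] by blast
    moreover have "\<And>b. ?R b \<Longrightarrow> b = a" using bal_unique[OF x p] \<open>?R a\<close> by blast
    ultimately show ?thesis by blast
  qed
  have "?R (THE a. ?R a)" by (rule theI'[OF ex])
  thus ?thesis using lc by (simp add: Tn_def)
qed

lemma T_eq:
  assumes x: "x \<in> Q" and p: "p < n"
    and a: "x p < a" "a < x (Suc (Suc p))" "Mx (x(Suc p := a)) p = Mx (x(Suc p := a)) (Suc p)"
  shows "Tn x p = a"
proof -
  have lc: "x p < x (Suc (Suc p))" using a by simp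
  show ?thesis using T_spec[OF x p lc] bal_unique[OF x p _ _ _ a] by blast
qed

lemma T_range:
  assumes x: "x \<in> Q" and p: "p < n"
  shows "x p \<le> Tn x p \<and> Tn x p \<le> x (Suc (Suc p))"
proof (cases "x p < x (Suc (Suc p))")
  case True thus ?thesis using T_spec[OF x p] by force
next
  case False
  have "x p \<le> x (Suc (Suc p))" using Q_mono[OF x, of p "Suc (Suc p)"] p by simp
  thus ?thesis using False by (simp add: Tn_def)
qed

lemma T_indep: "Tn (x(Suc p := v)) p = Tn x p"
  by (simp add: Tn_def)

lemma T_mono:
  assumes x: "x \<in> Q" and x': "x' \<in> Q" and p: "p < n"
    and le: "\<And>j. j \<le> Suc n \<Longrightarrow> j \<noteq> Suc p \<Longrightarrow> x j \<le> x' j"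
  shows "Tn x p \<le> Tn x' p"
proof -
  have le2: "x p \<le> x' p" "x (Suc (Suc p)) \<le> x' (Suc (Suc p))" using le p by auto
  show ?thesis
  proof (cases "x p < x (Suc (Suc p))")
    case c1: True
    show ?thesis
    proof (cases "x' p < x' (Suc (Suc p))")
      case c2: True
      have A: "x p < Tn x p" "Tn x p < x (Suc (Suc p))" "Mx (x(Suc p := Tn x p)) p = Mx (x(Suc p := Tn x p)) (Suc p)"
        using T_spec[OF x p c1] by auto
      have B: "x' p < Tn x' p" "Tn x' p < x' (Suc (Suc p))" "Mx (x'(Suc p := Tn x' p)) p = Mx (x'(Suc p := Tn x' p)) (Suc p)"
        using T_spec[OF x' p c2] by auto
      show ?thesis by (rule bal_mono[OF x x' p le A(1,2) B(1,2) A(3) B(3)])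
    next
      case c2: False
      have "x' p \<le> x' (Suc (Suc p))" using Q_mono[OF x', of p "Suc (Suc p)"] p by simp
      hence "Tn x' p = x' (Suc (Suc p))" using c2 by (simp add: Tn_def)
      thus ?thesis using T_range[OF x p] le2 by simp
    qed
  next
    case False
    hence "Tn x p = x p" by (simp add: Tn_def)
    thus ?thesis using T_range[OF x' p] le2 by simp
  qed
qed

end

context kern begin

lemma not_all_degenerate:
  assumes u: "u \<in> Q" and h: "\<And>q. q \<le> n \<Longrightarrow> \<not> u q < u (Suc q)"
  shows False
proof -
  have "q \<le> Suc n \<Longrightarrow> u q = 0" for q
  proof (induction q)
    case 0 thus ?case using u by (simp add: Q_def)
  next
    case (Suc q)
    hence "u q = 0" by simp
    moreover have "u q \<le> u (Suc q)" using u Suc(2) by (simp add: Q_def)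
    moreover have "\<not> u q < u (Suc q)" using h Suc(2) by simp
    ultimately show ?case by simp
  qed
  hence "u (Suc n) = 0" by simp
  thus False using u by (simp add: Q_def)
qed

lemma strict_of_eq:
  assumes u: "u \<in> Q" and eq: "\<And>q. q \<le> n \<Longrightarrow> Mx u q = Mx u 0"
  shows "\<And>q. q \<le> n \<Longrightarrow> u q < u (Suc q)"
proof (rule ccontr)
  fix q assume q: "q \<le> n" and nq: "\<not> u q < u (Suc q)"
  have "u q \<le> u (Suc q)" using u q by (simp add: Q_def)
  hence "u q = u (Suc q)" using nq by simp
  hence m: "Mx u q = -\<infinity>" using Mx_degenerate[OF u q] by simp
  obtain q' where q': "q' \<le> n" "u q' < u (Suc q')" using not_all_degenerate[OF u] by blast
  obtain z where z: "nf u z" "Mx u q' = Fs u z" using maximizer[OF u q'] by blast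
  have "Mx u q' \<noteq> -\<infinity>" using z by (simp add: Fs_nf)
  thus False using m eq[OF q] eq[OF q'(1)] by simp
qed

theorem loc_main:
  "\<exists>u\<in>Q. (\<forall>q\<le>n. u q < u (Suc q)) \<and> (\<forall>q\<le>n. Mx u q = Mx u 0) \<and>
     (\<forall>v\<in>Q. (\<forall>q\<le>n. v q < v (Suc q)) \<and> (\<forall>q\<le>n. Mx v q = Mx v 0) \<longrightarrow> (\<forall>i\<le>n. v i = u i))"
proof -
  define D where "D = {x \<in> Q. \<forall>p<n. x (Suc p) \<le> Tn x p}"
  define x0 :: "nat \<Rightarrow> real" where "x0 = (\<lambda>i. if i = Suc n then 2*pi else 0)"
  have x0Q: "x0 \<in> Q" unfolding Q_def x0_def by auto
  have x0D: "x0 \<in> D" unfolding D_def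
  proof (intro CollectI conjI allI impI x0Q)
    fix p assume p: "p < n"
    have "x0 p \<le> Tn x0 p" using T_range[OF x0Q p] by simp
    thus "x0 (Suc p) \<le> Tn x0 p" using p by (simp add: x0_def)
  qed
  have DQ: "x \<in> D \<Longrightarrow> x \<in> Q" for x by (simp add: D_def)
  have bdd: "bdd_above ((\<lambda>x. x i) ` D)" if i: "i \<le> Suc n" for i
    by (rule bdd_aboveI[of _ "2*pi"]) (use Q_bounds DQ i in blast)
  have Dne: "(\<lambda>x. x i) ` D \<noteq> {}" for i using x0D by blast
  define u where "u = (\<lambda>i. if Suc 0 \<le> i \<and> i \<le> n then Sup ((\<lambda>x. x i) ` D) else x0 i)"
  have le_u: "x i \<le> u i" if x: "x \<in> D" and i: "i \<le> Suc n" for x i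
  proof (cases "Suc 0 \<le> i \<and> i \<le> n")
    case True
    have "x i \<le> Sup ((\<lambda>x. x i) ` D)" by (rule cSup_upper) (use x bdd i in auto)
    thus ?thesis using True by (simp add: u_def)
  next
    case False
    hence "i = 0 \<or> i = Suc n" using i by auto
    thus ?thesis using DQ[OF x] False by (auto simp: u_def x0_def Q_def)
  qed
  have uQ: "u \<in> Q" unfolding Q_def
  proof (intro CollectI conjI allI impI)
    show "u 0 = 0" by (simp add: u_def x0_def)
    show "u (Suc n) = 2*pi" by (simp add: u_def x0_def)
    fix i assume i: "i \<le> n"
    show "u i \<le> u (Suc i)"
    proof (cases "i = 0")
      case True
      have "x0 (Suc 0) \<le> u (Suc 0)" using le_u[OF x0D, of "Suc 0"] by simp
      moreover have "0 \<le> x0 (Suc 0)" by (simp add: x0_def)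
      ultimately show ?thesis using True by (simp add: u_def x0_def)
    next
      case False
      have "Sup ((\<lambda>x. x i) ` D) \<le> u (Suc i)"
      proof (rule cSup_least[OF Dne])
        fix r assume "r \<in> (\<lambda>x. x i) ` D"
        then obtain x where x: "x \<in> D" "r = x i" by blast
        have "x i \<le> x (Suc i)" using DQ[OF x(1)] i by (simp add: Q_def)
        also have "\<dots> \<le> u (Suc i)" using le_u[OF x(1)] i by simp
        finally show "r \<le> u (Suc i)" using x by simp
      qed
      thus ?thesis using False i by (simp add: u_def)
    qed
  qed
  have leT: "u j \<le> v j" if "v = u(Suc p := Tn u p)" "u (Suc p) \<le> Tn u p" for v p j
    using that by auto
  have uD: "u \<in> D" unfolding D_def
  proof (intro CollectI conjI allI impI uQ)
    fix p assume p: "p < n"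
    have "Sup ((\<lambda>x. x (Suc p)) ` D) \<le> Tn u p"
    proof (rule cSup_least[OF Dne])
      fix r assume "r \<in> (\<lambda>x. x (Suc p)) ` D"
      then obtain x where x: "x \<in> D" "r = x (Suc p)" by blast
      have "x (Suc p) \<le> Tn x p" using x(1) p by (simp add: D_def)
      also have "\<dots> \<le> Tn u p" by (rule T_mono[OF DQ[OF x(1)] uQ p]) (use le_u[OF x(1)] in blast)
      finally show "r \<le> Tn u p" using x by simp
    qed
    thus "u (Suc p) \<le> Tn u p" using p by (simp add: u_def)
  qed
  have fixp: "u (Suc p) = Tn u p" if p: "p < n" for p
  proof (rule ccontr)
    assume ne: "u (Suc p) \<noteq> Tn u p"
    have lt: "u (Suc p) < Tn u p" using uD p ne by (auto simp: D_def)
    define v where "v = u(Suc p := Tn u p)"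
    have uv: "u j \<le> v j" for j using lt by (simp add: v_def)
    have vQ: "v \<in> Q" unfolding v_def by (rule Q_upd[OF uQ p]) (use T_range[OF uQ p] in auto)
    have "v \<in> D" unfolding D_def
    proof (intro CollectI conjI allI impI vQ)
      fix p' assume p': "p' < n"
      show "v (Suc p') \<le> Tn v p'"
      proof (cases "p' = p")
        case True
        have "Tn v p = Tn u p" unfolding v_def by (rule T_indep)
        thus ?thesis using True by (simp add: v_def)
      next
        case False
        have "v (Suc p') = u (Suc p')" using False by (simp add: v_def)
        also have "\<dots> \<le> Tn u p'" using uD p' by (simp add: D_def)
        also have "\<dots> \<le> Tn v p'" by (rule T_mono[OF uQ vQ p']) (use uv in blast)
        finally show ?thesis .
      qed
    qed
    hence "v (Suc p) \<le> u (Suc p)" using le_u[of v "Suc p"] p by simp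
    thus False using lt by (simp add: v_def)
  qed
  have step: "u p < u (Suc p) \<longleftrightarrow> u (Suc p) < u (Suc (Suc p))" if p: "p < n" for p
  proof (cases "u p < u (Suc (Suc p))")
    case True
    thus ?thesis using T_spec[OF uQ p True] fixp[OF p] by simp
  next
    case False
    have "u p \<le> u (Suc (Suc p))" using Q_mono[OF uQ, of p "Suc (Suc p)"] p by simp
    hence e: "u p = u (Suc (Suc p))" using False by simp
    hence "Tn u p = u p" using False by (simp add: Tn_def)
    thus ?thesis using fixp[OF p] e by simp
  qed
  have chain: "q \<le> n \<Longrightarrow> (u 0 < u (Suc 0) \<longleftrightarrow> u q < u (Suc q))" for q
  proof (induction q)
    case 0 thus ?case by simp
  next
    case (Suc q) thus ?case using step[of q] by simp
  qed
  have u01: "u 0 < u (Suc 0)"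
  proof (rule ccontr)
    assume "\<not> u 0 < u (Suc 0)"
    hence "\<And>q. q \<le> n \<Longrightarrow> \<not> u q < u (Suc q)" using chain by blast
    thus False using not_all_degenerate[OF uQ] by blast
  qed
  have ustrict: "\<forall>q\<le>n. u q < u (Suc q)" using chain u01 by blast
  have bal: "Mx u p = Mx u (Suc p)" if p: "p < n" for p
  proof -
    have lc: "u p < u (Suc (Suc p))" using ustrict p by (meson Suc_leI less_imp_le_nat less_trans)
    have e: "u(Suc p := Tn u p) = u" by (rule fun_upd_idem) (rule fixp[OF p])
    from T_spec[OF uQ p lc] have "Mx (u(Suc p := Tn u p)) p = Mx (u(Suc p := Tn u p)) (Suc p)" by blast
    thus ?thesis unfolding e .
  qed
  have ueq: "\<forall>q\<le>n. Mx u q = Mx u 0"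
  proof (intro allI impI)
    fix q show "q \<le> n \<Longrightarrow> Mx u q = Mx u 0"
    proof (induction q)
      case 0 thus ?case by simp
    next
      case (Suc q)
      hence q: "q < n" by simp
      have "Mx u (Suc q) = Mx u q" using bal[OF q] by simp
      also have "\<dots> = Mx u 0" using Suc.IH q by simp
      finally show ?case .
    qed
  qed
  have uniq: "\<forall>i\<le>n. v i = u i" if vQ: "v \<in> Q" and vs: "\<forall>q\<le>n. v q < v (Suc q)"
    and ve: "\<forall>q\<le>n. Mx v q = Mx v 0" for v
  proof -
    have vD: "v \<in> D" unfolding D_def
    proof (intro CollectI conjI allI impI vQ)
      fix p assume p: "p < n"
      have a1: "v p < v (Suc p)" "v (Suc p) < v (Suc (Suc p))" using vs p by auto
      have e: "v(Suc p := v (Suc p)) = v" by (rule fun_upd_idem) (rule refl)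
      have m1: "Mx v p = Mx v 0" using ve p less_imp_le_nat by blast
      have m2: "Mx v (Suc p) = Mx v 0" using ve p Suc_leI by blast
      have "Mx (v(Suc p := v (Suc p))) p = Mx (v(Suc p := v (Suc p))) (Suc p)"
        unfolding e using m1 m2 by simp
      hence "Tn v p = v (Suc p)" by (rule T_eq[OF vQ p a1])
      thus "v (Suc p) \<le> Tn v p" by simp
    qed
    have h1: "\<And>i. i \<le> n \<Longrightarrow> v i \<le> u i" using le_u[OF vD] by simp
    have h2: "\<And>q. q \<le> n \<Longrightarrow> v q < v (Suc q)" using vs by blast
    have h3: "\<And>q. q \<le> n \<Longrightarrow> u q < u (Suc q)" using ustrict by blast
    have h4: "\<And>q. q \<le> n \<Longrightarrow> Mx v q = Mx v 0" using ve by blast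
    have h5: "\<And>q. q \<le> n \<Longrightarrow> Mx u q = Mx u 0" using ueq by blast
    have "\<And>i. i \<le> n \<Longrightarrow> v i = u i" by (rule uniq_pair[OF vQ uQ h1 h2 h3 h4 h5])
    thus ?thesis by blast
  qed
  show ?thesis using uQ ustrict ueq uniq by blast
qed

end

lemma perm_le: "\<sigma> permutes {1..n} \<Longrightarrow> j \<le> n \<Longrightarrow> \<sigma> j \<le> n"
proof -
  assume s: "\<sigma> permutes {1..n}" and j: "j \<le> n"
  show ?thesis
  proof (cases "j \<in> {1..n}")
    case True thus ?thesis using permutes_in_image[OF s] by auto
  next
    case False
    hence "\<sigma> j = j" using permutes_not_in[OF s] by blast
    thus ?thesis using j by simp
  qed
qed

lemma kern_perm:
  assumes kk: "kern n K k" and s: "\<sigma> permutes {1..n}"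
  shows "kern n (\<lambda>i. K (\<sigma> i)) (\<lambda>i. k (\<sigma> i))"
proof -
  interpret kern n K k by (rule kk)
  show ?thesis
  proof (rule kern.intro)
    fix j t assume j: "j \<le> n"
    hence sj: "\<sigma> j \<le> n" by (rule perm_le[OF s])
    show "K (\<sigma> j) (t + 2*pi) = K (\<sigma> j) t" by (rule periodic[OF sj])
    show "t \<in> {0<..<2*pi} \<Longrightarrow> K (\<sigma> j) t = ereal (k (\<sigma> j) t)" by (rule real_valued[OF sj])
  next
    fix j assume j: "j \<le> n"
    hence sj: "\<sigma> j \<le> n" by (rule perm_le[OF s])
    show "\<exists>k' k''. (\<forall>t\<in>{0<..<2*pi}.
               (k (\<sigma> j) has_real_derivative k' t) (at t) \<and> (k' has_real_derivative k'' t) (at t)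
               \<and> k'' t < 0) \<and> continuous_on {0<..<2*pi} k''" by (rule C2[OF sj])
    show "K (\<sigma> j) 0 = -\<infinity>" by (rule at_zero[OF sj])
    show "filterlim (k (\<sigma> j)) at_bot (at_right 0)" by (rule lim_right[OF sj])
    show "filterlim (k (\<sigma> j)) at_bot (at_left (2*pi))" by (rule lim_left[OF sj])
  qed
qed

lemma ynode_in: "j \<in> {1..n} \<Longrightarrow> ynode n y j = y j"
  by (simp add: ynode_def)

lemma perm_eq:
  assumes s: "\<sigma> permutes {1..n}" and s': "\<sigma>' permutes {1..n}"
    and h: "\<forall>k\<in>{0..n}. ynode n y (\<sigma> k) < ynode n y (\<sigma> (k+1))"
    and h': "\<forall>k\<in>{0..n}. ynode n y (\<sigma>' k) \<le> ynode n y (\<sigma>' (k+1))"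
  shows "\<sigma>' = \<sigma>"
proof -
  have vs: "ynode n y (\<sigma> i) = y (\<sigma> i)" "ynode n y (\<sigma>' i) = y (\<sigma>' i)" if i: "i \<in> {1..n}" for i
    using permutes_in_image[OF s, of i] permutes_in_image[OF s', of i] i by (auto intro!: ynode_in)
  define xs where "xs = map (\<lambda>i. y (\<sigma> i)) [1..<Suc n]"
  define ys where "ys = map (\<lambda>i. y (\<sigma>' i)) [1..<Suc n]"
  have len: "length xs = n" "length ys = n" by (auto simp: xs_def ys_def)
  have nx: "xs ! i = y (\<sigma> (Suc i))" "ys ! i = y (\<sigma>' (Suc i))" if "i < n" for i
    using that by (auto simp: xs_def ys_def nth_map_upt simp del: upt_Suc)
  have sw: "sorted_wrt (<) xs"
  proof (subst sorted_wrt_iff_nth_Suc_transp)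
    show "transp ((<) :: real \<Rightarrow> real \<Rightarrow> bool)" by (rule transpI) simp
    show "\<forall>i. Suc i < length xs \<longrightarrow> xs ! i < xs ! Suc i"
    proof (intro allI impI)
      fix i assume i: "Suc i < length xs"
      have "ynode n y (\<sigma> (Suc i)) < ynode n y (\<sigma> (Suc i + 1))" using h i len by auto
      moreover have "Suc i \<in> {1..n}" "Suc (Suc i) \<in> {1..n}" using i len by auto
      ultimately show "xs ! i < xs ! Suc i" using vs nx i len by simp
    qed
  qed
  hence sx: "sorted xs" "distinct xs" using strict_sorted_iff by auto
  have sy: "sorted ys" unfolding sorted_iff_nth_Suc
  proof (intro allI impI)
    fix i assume i: "Suc i < length ys"
    have "ynode n y (\<sigma>' (Suc i)) \<le> ynode n y (\<sigma>' (Suc i + 1))" using h' i len by auto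
    moreover have "Suc i \<in> {1..n}" "Suc (Suc i) \<in> {1..n}" using i len by auto
    ultimately show "ys ! i \<le> ys ! Suc i" using vs nx i len by simp
  qed
  have up: "set [1..<Suc n] = {1..n}" by auto
  have setx: "set xs = y ` {1..n}"
    unfolding xs_def set_map up using permutes_image[OF s] by (simp add: image_image[symmetric])
  have sety: "set ys = y ` {1..n}"
    unfolding ys_def set_map up using permutes_image[OF s'] by (simp add: image_image[symmetric])
  have dy: "distinct ys"
  proof (rule card_distinct)
    have "card (set ys) = card (set xs)" using setx sety by simp
    also have "\<dots> = length xs" by (rule distinct_card[OF sx(2)])
    finally show "card (set ys) = length ys" using len by simp
  qed
  have xy: "xs = ys" by (rule sorted_distinct_set_unique[OF sx sy dy]) (simp add: setx sety)
  show ?thesis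
  proof
    fix i
    show "\<sigma>' i = \<sigma> i"
    proof (cases "i \<in> {1..n}")
      case False thus ?thesis using permutes_not_in[OF s] permutes_not_in[OF s'] by metis
    next
      case True
      then obtain i0 where i0: "i = Suc i0" "i0 < n" by (cases i) auto
      have e1: "y (\<sigma> i) = y (\<sigma>' i)" using nx[OF i0(2)] xy i0 by simp
      have "\<sigma>' i \<in> \<sigma> ` {1..n}" using permutes_in_image[OF s'] permutes_image[OF s] True by auto
      then obtain j where j: "j \<in> {1..n}" "\<sigma>' i = \<sigma> j" by blast
      then obtain j0 where j0: "j = Suc j0" "j0 < n" by (cases j) auto
      have "xs ! j0 = xs ! i0" using nx[OF i0(2)] nx[OF j0(2)] e1 j i0 j0 by simp
      hence "j0 = i0" using nth_eq_iff_index_eq[OF sx(2)] len i0 j0 by simp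
      thus ?thesis using j i0 j0 by simp
    qed
  qed
qed

context kern begin

lemma Fs_cong: "(\<And>i. i \<le> n \<Longrightarrow> u i = v i) \<Longrightarrow> Fs u t = Fs v t"
  unfolding Fs_def by (intro sum.cong) auto

lemma Mx_cong:
  assumes "\<And>i. i \<le> Suc n \<Longrightarrow> u i = v i" and q: "q \<le> n"
  shows "Mx u q = Mx v q"
proof -
  have "u q = v q" "u (Suc q) = v (Suc q)" using assms by auto
  moreover have "\<And>t. Fs u t = Fs v t" by (rule Fs_cong) (use assms in auto)
  ultimately show ?thesis by (simp add: Mx_def)
qed

end

lemma Fsum_eq:
  assumes s: "\<sigma> permutes {1..n}" and kk: "kern n (\<lambda>i. K (\<sigma> i)) (\<lambda>i. k (\<sigma> i))"
  shows "Fsum n K y t = kern.Fs n (\<lambda>i. K (\<sigma> i)) (\<lambda>i. ynode n y (\<sigma> i)) t"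
proof -
  interpret I: kern n "\<lambda>i. K (\<sigma> i)" "\<lambda>i. k (\<sigma> i)" by (rule kk)
  have s0: "\<sigma> 0 = 0" using permutes_not_in[OF s, of 0] by simp
  have "kern.Fs n (\<lambda>i. K (\<sigma> i)) (\<lambda>i. ynode n y (\<sigma> i)) t
      = (\<Sum>i\<in>{0..n}. K (\<sigma> i) (t - ynode n y (\<sigma> i)))" by (simp add: I.Fs_def)
  also have "\<dots> = K (\<sigma> 0) (t - ynode n y (\<sigma> 0)) + (\<Sum>i\<in>{1..n}. K (\<sigma> i) (t - ynode n y (\<sigma> i)))"
  proof -
    have "{0..n} = insert 0 {1..n}" by auto
    thus ?thesis by simp
  qed
  also have "(\<Sum>i\<in>{1..n}. K (\<sigma> i) (t - ynode n y (\<sigma> i))) = (\<Sum>j\<in>{1..n}. K j (t - ynode n y j))"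
    by (rule sum.reindex_bij_betw[OF permutes_imp_bij[OF s], of "\<lambda>j. K j (t - ynode n y j)"])
  also have "\<dots> = (\<Sum>j\<in>{1..n}. K j (t - y j))" by (intro sum.cong refl) (simp add: ynode_in)
  finally show ?thesis using s0 by (simp add: Fsum_def ynode_def)
qed

lemma imax_eq:
  assumes s: "\<sigma> permutes {1..n}" and kk: "kern n (\<lambda>i. K (\<sigma> i)) (\<lambda>i. k (\<sigma> i))"
  shows "interval_max n K \<sigma> y q = kern.Mx n (\<lambda>i. K (\<sigma> i)) (\<lambda>i. ynode n y (\<sigma> i)) q"
proof -
  interpret I: kern n "\<lambda>i. K (\<sigma> i)" "\<lambda>i. k (\<sigma> i)" by (rule kk)
  show ?thesis unfolding interval_max_def I.Mx_def Fsum_eq[OF s kk] by simp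
qed


lemma perm_fix: "\<sigma> permutes {1..n} \<Longrightarrow> \<sigma> 0 = 0 \<and> \<sigma> (Suc n) = Suc n"
  using permutes_not_in[of \<sigma> "{1..n}" 0] permutes_not_in[of \<sigma> "{1..n}" "Suc n"] by auto

lemma cl_Q:
  assumes s: "\<sigma> permutes {1..n}" and kk: "kern n (\<lambda>i. K (\<sigma> i)) (\<lambda>i. k (\<sigma> i))"
    and cl: "\<forall>k\<in>{0..n}. ynode n y (\<sigma> k) \<le> ynode n y (\<sigma> (k+1))"
  shows "(\<lambda>i. ynode n y (\<sigma> i)) \<in> kern.Q n"
proof -
  interpret I: kern n "\<lambda>i. K (\<sigma> i)" "\<lambda>i. k (\<sigma> i)" by (rule kk)
  show ?thesis unfolding I.Q_def
  proof (intro CollectI conjI allI impI)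
    show "ynode n y (\<sigma> 0) = 0" using perm_fix[OF s] by (simp add: ynode_def)
    show "ynode n y (\<sigma> (Suc n)) = 2*pi" using perm_fix[OF s] by (simp add: ynode_def)
    fix i assume "i \<le> n"
    thus "ynode n y (\<sigma> i) \<le> ynode n y (\<sigma> (Suc i))" using cl by simp
  qed
qed

theorem corollary9p4:
  fixes n :: nat and K :: "nat \<Rightarrow> real \<Rightarrow> ereal" and k :: "nat \<Rightarrow> real \<Rightarrow> real"
  assumes periodic: "\<And>j t. j \<le> n \<Longrightarrow> K j (t + 2*pi) = K j t"
    and real_valued: "\<And>j t. j \<le> n \<Longrightarrow> t \<in> {0<..<2*pi} \<Longrightarrow> K j t = ereal (k j t)"
    and C2: "\<And>j. j \<le> n \<Longrightarrow> \<exists>k' k''. (\<forall>t\<in>{0<..<2*pi}.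
               (k j has_real_derivative k' t) (at t) \<and> (k' has_real_derivative k'' t) (at t)
               \<and> k'' t < 0) \<and> continuous_on {0<..<2*pi} k''"
    and at_zero: "\<And>j. j \<le> n \<Longrightarrow> K j 0 = -\<infinity>"
    and lim_right: "\<And>j. j \<le> n \<Longrightarrow> filterlim (k j) at_bot (at_right 0)"
    and lim_left: "\<And>j. j \<le> n \<Longrightarrow> filterlim (k j) at_bot (at_left (2*pi))"
  shows "(\<forall>y. equiosc_point n K y \<longrightarrow> (\<exists>\<sigma>. \<sigma> permutes {1..n} \<and> y \<in> Ssigma n \<sigma>))
       \<and> (\<forall>\<sigma>. \<sigma> permutes {1..n} \<longrightarrow> (\<exists>!y. y \<in> Ssigma n \<sigma> \<and> equiosc_point n K y))"
proof -
  have KK: "kern n K k" using periodic real_valued C2 at_zero lim_right lim_left by (rule kern.intro)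
  have KS: "kern n (\<lambda>i. K (\<sigma> i)) (\<lambda>i. k (\<sigma> i))" if s: "\<sigma> permutes {1..n}" for \<sigma>
    by (rule kern_perm[OF KK s])
  have P1: "\<forall>y. equiosc_point n K y \<longrightarrow> (\<exists>\<sigma>. \<sigma> permutes {1..n} \<and> y \<in> Ssigma n \<sigma>)"
  proof (intro allI impI)
    fix y assume e: "equiosc_point n K y"
    then obtain \<sigma> where s: "\<sigma> permutes {1..n}" and cl: "y \<in> Ssigma_cl n \<sigma>"
      and eqk: "\<forall>k\<in>{0..n}. interval_max n K \<sigma> y k = interval_max n K \<sigma> y 0"
      and yt: "y \<in> torus_pts n"
      unfolding equiosc_point_def by blast
    interpret I: kern n "\<lambda>i. K (\<sigma> i)" "\<lambda>i. k (\<sigma> i)" by (rule KS[OF s])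
    let ?u = "\<lambda>i. ynode n y (\<sigma> i)"
    have uQ: "?u \<in> I.Q" by (rule cl_Q[OF s KS[OF s]]) (use cl in \<open>simp add: Ssigma_cl_def\<close>)
    have eqM: "I.Mx ?u q = I.Mx ?u 0" if q: "q \<le> n" for q
    proof -
      have "interval_max n K \<sigma> y q = interval_max n K \<sigma> y 0" by (rule eqk[rule_format]) (use q in simp)
      thus ?thesis using imax_eq[OF s KS[OF s], of y] by simp
    qed
    have st: "?u q < ?u (Suc q)" if "q \<le> n" for q by (rule I.strict_of_eq[OF uQ eqM that])
    have "y \<in> Ssigma n \<sigma>" unfolding Ssigma_def using yt st by simp
    thus "\<exists>\<sigma>. \<sigma> permutes {1..n} \<and> y \<in> Ssigma n \<sigma>" using s by blast
  qed
  have P2: "\<forall>\<sigma>. \<sigma> permutes {1..n} \<longrightarrow> (\<exists>!y. y \<in> Ssigma n \<sigma> \<and> equiosc_point n K y)"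
  proof (intro allI impI)
    fix \<sigma> assume s: "\<sigma> permutes {1..n}"
    interpret I: kern n "\<lambda>i. K (\<sigma> i)" "\<lambda>i. k (\<sigma> i)" by (rule KS[OF s])
    obtain u where uQ: "u \<in> I.Q" and us: "\<forall>q\<le>n. u q < u (Suc q)" and ue: "\<forall>q\<le>n. I.Mx u q = I.Mx u 0"
      and uu: "\<forall>v\<in>I.Q. (\<forall>q\<le>n. v q < v (Suc q)) \<and> (\<forall>q\<le>n. I.Mx v q = I.Mx v 0) \<longrightarrow> (\<forall>i\<le>n. v i = u i)"
      using I.loc_main by blast
    have sf: "\<sigma> 0 = 0" "\<sigma> (Suc n) = Suc n" using perm_fix[OF s] by auto
    have u0: "u 0 = 0" "u (Suc n) = 2*pi" using uQ by (auto simp: I.Q_def)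
    define y where "y = (\<lambda>j. if j \<in> {1..n} then u (inv \<sigma> j) else 0)"
    have uy: "ynode n y (\<sigma> i) = u i" if i: "i \<le> Suc n" for i
    proof -
      consider "i = 0" | "i = Suc n" | "i \<in> {1..n}" using i by force
      thus ?thesis
      proof cases
        case 1 thus ?thesis using sf u0 by (simp add: ynode_def)
      next
        case 2 thus ?thesis using sf u0 by (simp add: ynode_def)
      next
        case 3
        hence "\<sigma> i \<in> {1..n}" using permutes_in_image[OF s] by simp
        hence "ynode n y (\<sigma> i) = u (inv \<sigma> (\<sigma> i))" by (simp add: ynode_in y_def)
        thus ?thesis using permutes_inverses(2)[OF s] by simp
      qed
    qed
    have ub: "0 < u i \<and> u i < 2*pi" if i: "i \<in> {1..n}" for i
    proof -
      have "u 0 < u (Suc 0)" using us by simp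
      moreover have "u (Suc 0) \<le> u i" using I.Q_mono[OF uQ, of "Suc 0" i] i by simp
      moreover have "u i < u (Suc i)" using us i by simp
      moreover have "u (Suc i) \<le> u (Suc n)" using I.Q_mono[OF uQ, of "Suc i" "Suc n"] i by simp
      ultimately show ?thesis using u0 by simp
    qed
    have yt: "y \<in> torus_pts n" unfolding torus_pts_def
    proof (intro CollectI conjI ballI allI impI)
      fix j assume j: "j \<in> {1..n}"
      hence "inv \<sigma> j \<in> {1..n}" using permutes_in_image[OF permutes_inv[OF s]] by simp
      hence "0 < u (inv \<sigma> j) \<and> u (inv \<sigma> j) < 2*pi" by (rule ub)
      thus "0 \<le> y j" "y j < 2*pi" using j by (auto simp: y_def)
    next
      fix j assume "j \<notin> {1..n}" thus "y j = 0" unfolding y_def by (rule if_not_P)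
    qed
    have yS: "y \<in> Ssigma n \<sigma>" unfolding Ssigma_def
    proof (intro CollectI conjI ballI yt)
      fix q assume q: "q \<in> {0..n}"
      show "ynode n y (\<sigma> q) < ynode n y (\<sigma> (q+1))" using uy[of q] uy[of "Suc q"] us q by simp
    qed
    have Mxy: "I.Mx (\<lambda>i. ynode n y (\<sigma> i)) q = I.Mx u q" if "q \<le> n" for q
      by (rule I.Mx_cong[OF _ that]) (rule uy)
    have ye: "equiosc_point n K y" unfolding equiosc_point_def
    proof (intro conjI yt exI[of _ \<sigma>] s ballI)
      show "y \<in> Ssigma_cl n \<sigma>" using yS by (auto simp: Ssigma_def Ssigma_cl_def less_imp_le)
      fix q assume q: "q \<in> {0..n}"
      have "interval_max n K \<sigma> y q = I.Mx u q" using imax_eq[OF s KS[OF s], of y q] Mxy[of q] q by simp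
      also have "\<dots> = I.Mx u 0" using ue q atLeastAtMost_iff by blast
      also have "\<dots> = interval_max n K \<sigma> y 0" using imax_eq[OF s KS[OF s], of y 0] Mxy[of 0] by simp
      finally show "interval_max n K \<sigma> y q = interval_max n K \<sigma> y 0" .
    qed
    show "\<exists>!y. y \<in> Ssigma n \<sigma> \<and> equiosc_point n K y"
    proof (rule ex1I[of _ y])
      show "y \<in> Ssigma n \<sigma> \<and> equiosc_point n K y" using yS ye by blast
      fix y' assume h: "y' \<in> Ssigma n \<sigma> \<and> equiosc_point n K y'"
      obtain \<sigma>' where s': "\<sigma>' permutes {1..n}" and cl': "y' \<in> Ssigma_cl n \<sigma>'"
        and eqk': "\<forall>k\<in>{0..n}. interval_max n K \<sigma>' y' k = interval_max n K \<sigma>' y' 0"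
        and yt': "y' \<in> torus_pts n"
        using h unfolding equiosc_point_def by blast
      have str: "\<forall>k\<in>{0..n}. ynode n y' (\<sigma> k) < ynode n y' (\<sigma> (k+1))" using h by (simp add: Ssigma_def)
      have "\<sigma>' = \<sigma>" by (rule perm_eq[OF s s'(1) str]) (use cl' in \<open>simp add: Ssigma_cl_def\<close>)
      hence eqk: "\<forall>k\<in>{0..n}. interval_max n K \<sigma> y' k = interval_max n K \<sigma> y' 0" using eqk' by (simp only:)
      let ?v = "\<lambda>i. ynode n y' (\<sigma> i)"
      have vQ: "?v \<in> I.Q" by (rule cl_Q[OF s KS[OF s]]) (use str in \<open>simp add: less_imp_le\<close>)
      have vs: "\<forall>q\<le>n. ?v q < ?v (Suc q)" using str by simp
      have ve: "\<forall>q\<le>n. I.Mx ?v q = I.Mx ?v 0"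
      proof (intro allI impI)
        fix q assume q: "q \<le> n"
        have "interval_max n K \<sigma> y' q = interval_max n K \<sigma> y' 0" by (rule eqk[rule_format]) (use q in simp)
        thus "I.Mx ?v q = I.Mx ?v 0" using imax_eq[OF s KS[OF s], of y'] by simp
      qed
      have vu: "\<forall>i\<le>n. ?v i = u i" using mp[OF bspec[OF uu vQ] conjI[OF vs ve]] .
      show "y' = y"
      proof
        fix j show "y' j = y j"
        proof (cases "j \<in> {1..n}")
          case True
          define i where "i = inv \<sigma> j"
          have i: "i \<in> {1..n}" using permutes_in_image[OF permutes_inv[OF s]] True by (simp add: i_def)
          have sj: "\<sigma> i = j" using permutes_inverses(1)[OF s] by (simp add: i_def)
          have "y' j = ynode n y' (\<sigma> i)" using sj True by (simp add: ynode_in)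
          also have "\<dots> = u i" using vu i by simp
          finally show ?thesis using True by (simp add: y_def i_def)
        next
          case False
          have "y' j = 0" using yt' False by (simp add: torus_pts_def)
          moreover have "y j = 0" unfolding y_def using False by (rule if_not_P)
          ultimately show ?thesis by simp
        qed
      qed
    qed
  qed
  show ?thesis using P1 P2 by blast
qed


end
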